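(* Assume the standing $J$-self-adjoint setting. Assume also that $A_0$ and $A_1$ are bounded, that $d=\mathrm{dist}(\mathrm{spec}(A_0),\mathrm{spec}(A_1))>0$, and that $\|V\|<d/2$. Then $\mathrm{spec}(L)\subset\mathbb R$.
   Context: Standing $J$-self-adjoint setting: - $A_0$ and $A_1$ are self-adjoint operators on Hilbert spaces $\mathfrak H_0$ and $\mathfrak H_1$. - $B\in\mathcal B(\mathfrak H_1,\mathfrak H_0)$. - $\mathfrak H=\mathfrak H_0\oplus\mathfrak H_1$, $A=\mathrm{diag}(A_0,A_1)$, and $V=\begin{pmatrix}0&B\\-B^*&0\end{pmatrix}$. - $L=A+V$, i.e. $L(x_0\oplus x_1)=(A_0x_0+Bx_1)\oplus(-B^*x_0+A_1x_1)$. *)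

theory Defs
  imports "HOL-Analysis.Analysis"
begin

class complex_normed = real_normed_vector +
  fixes scaleC :: "complex \<Rightarrow> 'a \<Rightarrow> 'a"
  assumes scaleC_add_right: "scaleC a (x + y) = scaleC a x + scaleC a y"
    and scaleC_add_left: "scaleC (a + b) x = scaleC a x + scaleC b x"
    and scaleC_scaleC: "scaleC a (scaleC b x) = scaleC (a * b) x"
    and scaleC_one: "scaleC 1 x = x"
    and scaleR_scaleC: "scaleR r x = scaleC (complex_of_real r) x"
    and norm_scaleC: "norm (scaleC a x) = cmod a * norm x"

class complex_inner = complex_normed +
  fixes cinner :: "'a \<Rightarrow> 'a \<Rightarrow> complex"
  assumes cinner_commute: "cinner x y = cnj (cinner y x)"
    and cinner_add_left: "cinner (x + y) z = cinner x z + cinner y z"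
    and cinner_scaleC_left: "cinner (scaleC r x) y = cnj r * cinner x y"
    and cinner_real_nonneg: "cinner x x \<in> \<real> \<and> 0 \<le> Re (cinner x x)"
    and cinner_zero_iff: "cinner x x = 0 \<longleftrightarrow> x = 0"
    and norm_eq_sqrt_cinner: "norm x = sqrt (Re (cinner x x))"

class chilbert = complex_inner + complete_space

instantiation complex :: chilbert
begin
definition scaleC_complex_def: "scaleC a (x::complex) = a * x"
definition cinner_complex_def: "cinner (x::complex) y = cnj x * y"
instance
proof
  fix x y :: complex and a b :: complex and r :: real
  show "scaleC a (x + y) = scaleC a x + scaleC a y" by (simp add: scaleC_complex_def algebra_simps)
  show "scaleC (a + b) x = scaleC a x + scaleC b x" by (simp add: scaleC_complex_def algebra_simps)
  show "scaleC a (scaleC b x) = scaleC (a * b) x" by (simp add: scaleC_complex_def)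
  show "scaleC 1 x = x" by (simp add: scaleC_complex_def)
  show "scaleR r x = scaleC (complex_of_real r) x" by (simp add: scaleC_complex_def scaleR_conv_of_real)
  show "norm (scaleC a x) = cmod a * norm x" by (simp add: scaleC_complex_def norm_mult)
  show "cinner x y = cnj (cinner y x)" by (simp add: cinner_complex_def)
  fix z :: complex
  show "cinner (x + y) z = cinner x z + cinner y z" by (simp add: cinner_complex_def algebra_simps)
  show "cinner (scaleC a x) y = cnj a * cinner x y" by (simp add: cinner_complex_def scaleC_complex_def)
  show "cinner x x \<in> \<real> \<and> 0 \<le> Re (cinner x x)"
    by (simp add: cinner_complex_def mult.commute[of "cnj x"] complex_mult_cnj del: complex_cnj_mult)
  show "cinner x x = 0 \<longleftrightarrow> x = 0" by (simp add: cinner_complex_def)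
  show "norm x = sqrt (Re (cinner x x))"
    by (simp add: cinner_complex_def cmod_def power2_eq_square)
qed
end

text \<open>Orthogonal direct sum \<open>H0 \<oplus> H1\<close>: the product type with componentwise complex
  scaling; its norm (from HOL-Analysis) is \<open>sqrt (norm x0^2 + norm x1^2)\<close>.\<close>
instantiation prod :: (complex_normed, complex_normed) complex_normed
begin
definition scaleC_prod_def: "scaleC a x = (scaleC a (fst x), scaleC a (snd x))"
instance
proof
  fix x y :: "'a \<times> 'b" and a b :: complex and r :: real
  show "scaleC a (x + y) = scaleC a x + scaleC a y"
    by (simp add: scaleC_prod_def scaleC_add_right)
  show "scaleC (a + b) x = scaleC a x + scaleC b x"
    by (simp add: scaleC_prod_def scaleC_add_left)
  show "scaleC a (scaleC b x) = scaleC (a * b) x" by (simp add: scaleC_prod_def scaleC_scaleC)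
  show "scaleC 1 x = x" by (simp add: scaleC_prod_def scaleC_one)
  show "scaleR r x = scaleC (complex_of_real r) x"
    by (simp add: scaleC_prod_def scaleR_prod_def scaleR_scaleC)
  have "sqrt ((cmod a * norm (fst x))\<^sup>2 + (cmod a * norm (snd x))\<^sup>2)
        = cmod a * sqrt ((norm (fst x))\<^sup>2 + (norm (snd x))\<^sup>2)"
    by (simp add: power_mult_distrib distrib_left[symmetric] real_sqrt_mult)
  then show "norm (scaleC a x) = cmod a * norm x"
    by (simp add: scaleC_prod_def norm_prod_def norm_scaleC)
qed
end

definition bounded_clinear :: "('a::complex_normed \<Rightarrow> 'b::complex_normed) \<Rightarrow> bool" where
  "bounded_clinear f \<longleftrightarrow>
     (\<forall>x y. f (x + y) = f x + f y) \<and> (\<forall>c x. f (scaleC c x) = scaleC c (f x)) \<and>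
     (\<exists>K. \<forall>x. norm (f x) \<le> norm x * K)"

definition bounded_selfadjoint :: "('a::chilbert \<Rightarrow> 'a) \<Rightarrow> bool" where
  "bounded_selfadjoint T \<longleftrightarrow> bounded_clinear T \<and> (\<forall>x y. cinner (T x) y = cinner x (T y))"

definition is_adjoint :: "('a::chilbert \<Rightarrow> 'b::chilbert) \<Rightarrow> ('b \<Rightarrow> 'a) \<Rightarrow> bool" where
  "is_adjoint T T' \<longleftrightarrow> (\<forall>x y. cinner (T x) y = cinner x (T' y))"

definition cspec :: "('a::complex_normed \<Rightarrow> 'a) \<Rightarrow> complex set" where
  "cspec T = {z. \<not> (\<exists>S. bounded_clinear S \<and>
                      (\<forall>x. S (T x - scaleC z x) = x) \<and>
                      (\<forall>y. T (S y) - scaleC z (S y) = y))}"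

definition blockV :: "('b \<Rightarrow> 'a) \<Rightarrow> ('a \<Rightarrow> 'b) \<Rightarrow> ('a::chilbert \<times> 'b::chilbert \<Rightarrow> 'a \<times> 'b)" where
  "blockV B Bs = (\<lambda>(x0, x1). (B x1, - Bs x0))"

definition blockL :: "('a \<Rightarrow> 'a) \<Rightarrow> ('b \<Rightarrow> 'b) \<Rightarrow> ('b \<Rightarrow> 'a) \<Rightarrow> ('a \<Rightarrow> 'b)
                        \<Rightarrow> ('a::chilbert \<times> 'b::chilbert \<Rightarrow> 'a \<times> 'b)" where
  "blockL A0 A1 B Bs = (\<lambda>(x0, x1). (A0 x0 + B x1, - Bs x0 + A1 x1))"

end

theory Submission
  imports Defs
begin


lemma scaleC_zero_left[simp]: "scaleC 0 (x::'a::complex_normed) = 0"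
proof -
  have "scaleC 0 x = scaleC (complex_of_real 0) x" by simp
  also have "\<dots> = scaleR 0 x" by (rule scaleR_scaleC[symmetric])
  finally show ?thesis by simp
qed
lemma scaleC_zero_right[simp]: "scaleC a (0::'a::complex_normed) = 0"
proof -
  have "scaleC a 0 + scaleC a 0 = scaleC a 0 + (0::'a)"
    using scaleC_add_right[of a "0::'a" 0] by simp
  thus ?thesis by simp
qed
lemma scaleC_minus_left: "scaleC (- a) (x::'a::complex_normed) = - scaleC a x"
proof -
  have "scaleC (- a) x + scaleC a x = 0"
    using scaleC_add_left[of "-a" a x] by simp
  thus ?thesis by (simp add: eq_neg_iff_add_eq_0)
qed
lemma scaleC_minus_right: "scaleC a (- x::'a::complex_normed) = - scaleC a x"
proof -
  have "scaleC a (- x) + scaleC a x = 0"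
    using scaleC_add_right[of a "-x" x] by simp
  thus ?thesis by (simp add: eq_neg_iff_add_eq_0)
qed
lemma scaleC_diff_right: "scaleC a (x - y::'a::complex_normed) = scaleC a x - scaleC a y"
  by (simp only: diff_conv_add_uminus scaleC_add_right scaleC_minus_right)
lemma scaleC_diff_left: "scaleC (a - b) (x::'a::complex_normed) = scaleC a x - scaleC b x"
  by (simp only: diff_conv_add_uminus scaleC_add_left scaleC_minus_left)

lemma cinner_zero_left[simp]: "cinner 0 (y::'a::complex_inner) = 0"
proof -
  have "cinner 0 y + cinner 0 y = cinner 0 y + 0"
    using cinner_add_left[of "0::'a" 0 y] by simp
  thus ?thesis by simp
qed
lemma cinner_zero_right[simp]: "cinner (y::'a::complex_inner) 0 = 0"
  by (subst cinner_commute) simp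
lemma cinner_add_right: "cinner (z::'a::complex_inner) (x + y) = cinner z x + cinner z y"
  by (subst (1 2 3) cinner_commute) (simp add: cinner_add_left)
lemma cinner_scaleC_right: "cinner (y::'a::complex_inner) (scaleC r x) = r * cinner y x"
  by (subst (1 2) cinner_commute) (simp add: cinner_scaleC_left)
lemma cinner_minus_left: "cinner (- x) (y::'a::complex_inner) = - cinner x y"
proof -
  have "cinner (- x) y + cinner x y = 0"
    using cinner_add_left[of "-x" x y] by simp
  thus ?thesis by (simp add: eq_neg_iff_add_eq_0)
qed
lemma cinner_minus_right: "cinner (y::'a::complex_inner) (- x) = - cinner y x"
  by (subst (1 2) cinner_commute) (simp add: cinner_minus_left)
lemma cinner_diff_left: "cinner (x - z) (y::'a::complex_inner) = cinner x y - cinner z y"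
  by (simp only: diff_conv_add_uminus cinner_add_left cinner_minus_left)
lemma cinner_diff_right: "cinner (y::'a::complex_inner) (x - z) = cinner y x - cinner y z"
  by (simp only: diff_conv_add_uminus cinner_add_right cinner_minus_right)
lemma cinner_self: "cinner (x::'a::complex_inner) x = complex_of_real ((norm x)^2)"
proof -
  have r: "cinner x x \<in> \<real>" and p: "0 \<le> Re (cinner x x)" using cinner_real_nonneg by auto
  have "(norm x)^2 = Re (cinner x x)" using norm_eq_sqrt_cinner[of x] p by (simp add: real_sqrt_pow2)
  thus ?thesis using r by (metis Reals_cases Re_complex_of_real)
qed
lemma Re_cinner_self: "Re (cinner (x::'a::complex_inner) x) = (norm x)^2"
  by (simp add: cinner_self)



lemma quad_aux:
  fixes a b W :: real
  assumes "0 \<le> W" "0 \<le> a" "0 \<le> b" and H: "\<And>t. 0 \<le> a - 2*t*W + t^2*W*b"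
  shows "W \<le> a*b"
proof (cases "b > 0")
  case True
  have "0 \<le> a - 2*(1/b)*W + (1/b)^2*W*b" by (rule H)
  also have "\<dots> = a - W/b" using True by (simp add: field_simps power2_eq_square)
  finally show ?thesis using True by (simp add: field_simps)
next
  case False
  hence b0: "b = 0" using assms by simp
  show ?thesis
  proof (rule ccontr)
    assume "\<not> W \<le> a*b"
    hence Wp: "W > 0" using b0 by simp
    have "0 \<le> a - 2*((a+1)/(2*W))*W + ((a+1)/(2*W))^2*W*b" by (rule H)
    also have "\<dots> = -1" using Wp b0 by (simp add: field_simps)
    finally show False by simp
  qed
qed

definition clin :: "('a::complex_normed \<Rightarrow> 'b::complex_normed) \<Rightarrow> bool" where
  "clin f \<longleftrightarrow> (\<forall>x y. f (x + y) = f x + f y) \<and> (\<forall>c x. f (scaleC c x) = scaleC c (f x))"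

lemma clin_add: "clin f \<Longrightarrow> f (x + y) = f x + f y" by (simp add: clin_def)
lemma clin_scaleC: "clin f \<Longrightarrow> f (scaleC c x) = scaleC c (f x)" by (simp add: clin_def)
lemma clin_zero: "clin f \<Longrightarrow> f 0 = 0"
  using clin_scaleC[of f 0 0] by simp
lemma clin_minus: "clin f \<Longrightarrow> f (- x) = - f x"
proof -
  assume c: "clin f"
  have "f (- x) + f x = 0" using clin_add[OF c, of "-x" x] clin_zero[OF c] by simp
  thus ?thesis by (simp add: eq_neg_iff_add_eq_0)
qed
lemma clin_diff: "clin f \<Longrightarrow> f (x - y) = f x - f y"
  by (simp only: diff_conv_add_uminus clin_add clin_minus)

lemma bounded_clinear_clin: "bounded_clinear f \<Longrightarrow> clin f"
  by (simp add: bounded_clinear_def clin_def)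
lemma bounded_clinear_bound: fixes f :: "'a::complex_normed \<Rightarrow> 'b::complex_normed"
  shows "bounded_clinear f \<Longrightarrow> \<exists>K\<ge>0. \<forall>x. norm (f x) \<le> K * norm x"
proof -
  assume "bounded_clinear f"
  then obtain K where K: "\<forall>x. norm (f x) \<le> norm x * K" by (auto simp: bounded_clinear_def)
  have "\<forall>x. norm (f x) \<le> max K 0 * norm x"
  proof
    fix x :: 'a
    have "norm x * K \<le> norm x * max K 0" by (simp add: mult_left_mono)
    thus "norm (f x) \<le> max K 0 * norm x" using K[rule_format, of x] by (metis order_trans mult.commute)
  qed
  thus ?thesis by (intro exI[of _ "max K 0"]) simp
qed

lemma cs_form:
  fixes S :: "'a::complex_inner \<Rightarrow> 'a"
  assumes lin: "clin S"
    and sa: "\<And>x y. cinner (S x) y = cinner x (S y)"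
    and pos: "\<And>x. 0 \<le> Re (cinner x (S x))"
  shows "(cmod (cinner u (S v)))^2 \<le> Re (cinner u (S u)) * Re (cinner v (S v))"
proof -
  define w where "w = cinner u (S v)"
  have cvu: "cinner v (S u) = cnj w"
    unfolding w_def by (metis sa cinner_commute)
  have real: "\<And>x. cinner x (S x) = complex_of_real (Re (cinner x (S x)))"
  proof -
    fix x
    have e: "cinner x (S x) = cnj (cinner x (S x))" by (metis sa cinner_commute)
    have "Im (cinner x (S x)) = - Im (cinner x (S x))" using arg_cong[OF e, of Im] by simp
    hence "Im (cinner x (S x)) = 0" by simp
    thus "cinner x (S x) = complex_of_real (Re (cinner x (S x)))" by (simp add: complex_eq_iff)
  qed
  define a where "a = Re (cinner u (S u))"
  define b where "b = Re (cinner v (S v))"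
  have wsq: "w * cnj w = complex_of_real ((cmod w)^2)" by (metis complex_norm_square of_real_power)
  have "\<And>t. 0 \<le> a - 2*t*(cmod w)^2 + t^2*(cmod w)^2*b"
  proof -
    fix t :: real
    define k where "k = complex_of_real t * cnj w"
    define x where "x = u - scaleC k v"
    have Sx: "S x = S u - scaleC k (S v)" unfolding x_def using lin by (simp add: clin_diff clin_scaleC)
    have "cinner x (S x) = cinner u (S u) - k * cinner u (S v) - cnj k * cinner v (S u)
        + cnj k * k * cinner v (S v)"
      unfolding Sx unfolding x_def
      by (simp add: cinner_diff_left cinner_diff_right cinner_scaleC_left cinner_scaleC_right algebra_simps)
    also have "\<dots> = complex_of_real a - 2 * complex_of_real t * (w * cnj w)
        + (complex_of_real t)^2 * (w * cnj w) * complex_of_real b"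
      unfolding k_def cvu w_def[symmetric] a_def b_def using real[of u] real[of v]
      by (simp add: algebra_simps power2_eq_square)
    also have "\<dots> = complex_of_real (a - 2*t*(cmod w)^2 + t^2*(cmod w)^2*b)"
      unfolding wsq by simp
    finally have "Re (cinner x (S x)) = a - 2*t*(cmod w)^2 + t^2*(cmod w)^2*b" by simp
    thus "0 \<le> a - 2*t*(cmod w)^2 + t^2*(cmod w)^2*b" using pos[of x] by simp
  qed
  moreover have "0 \<le> a" "0 \<le> b" using pos unfolding a_def b_def by auto
  ultimately have "(cmod w)^2 \<le> a * b" by (intro quad_aux) auto
  thus ?thesis unfolding w_def a_def b_def .
qed

lemma clin_id: "clin (\<lambda>x. x)" by (simp add: clin_def)

lemma cinner_cs: "cmod (cinner (x::'a::complex_inner) y) \<le> norm x * norm y"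
proof -
  have "(cmod (cinner x y))^2 \<le> Re (cinner x x) * Re (cinner y y)"
    using cs_form[OF clin_id, of x y] by (simp add: Re_cinner_self)
  also have "\<dots> = (norm x * norm y)^2" by (simp add: Re_cinner_self power_mult_distrib)
  finally show ?thesis by (rule power2_le_imp_le) simp
qed



lemma approx_in_cspec:
  fixes T :: "'c::complex_normed \<Rightarrow> 'c"
  assumes H: "\<And>e. e > 0 \<Longrightarrow> \<exists>x. x \<noteq> 0 \<and> norm (T x - scaleC z x) < e * norm x"
  shows "z \<in> cspec T"
proof -
  have "\<not> (\<exists>S. bounded_clinear S \<and> (\<forall>x. S (T x - scaleC z x) = x))"
  proof
    assume "\<exists>S. bounded_clinear S \<and> (\<forall>x. S (T x - scaleC z x) = x)"
    then obtain S where S: "bounded_clinear S" "\<And>x. S (T x - scaleC z x) = x" by blast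
    obtain K where K: "K \<ge> 0" "\<And>x. norm (S x) \<le> K * norm x"
      using bounded_clinear_bound[OF S(1)] by blast
    obtain x where x: "x \<noteq> 0" "norm (T x - scaleC z x) < (1/(K+1)) * norm x"
      using H[of "1/(K+1)"] K(1) by auto
    have "norm x = norm (S (T x - scaleC z x))" using S(2) by simp
    also have "\<dots> \<le> K * norm (T x - scaleC z x)" by (rule K(2))
    also have "\<dots> \<le> K * ((1/(K+1)) * norm x)" using x(2) K(1) by (intro mult_left_mono) auto
    also have "\<dots> = (K/(K+1)) * norm x" by simp
    also have "\<dots> < 1 * norm x" using x(1) K(1) by (intro mult_strict_right_mono) auto
    finally show False by simp
  qed
  thus ?thesis unfolding cspec_def by blast
qed

lemma clin_shift:
  assumes "clin A" shows "clin (\<lambda>y. A y - scaleC c y)"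
  using assms unfolding clin_def
  by (simp add: scaleC_add_right scaleC_scaleC mult.commute scaleC_diff_right)

lemma sa_spec_point:
  fixes A :: "'a::chilbert \<Rightarrow> 'a"
  assumes sa: "bounded_selfadjoint A" and nt: "\<exists>x::'a. x \<noteq> 0"
  shows "\<exists>m\<ge>0. (\<forall>y. m * norm y \<le> norm (A y - scaleC (complex_of_real \<mu>) y)) \<and>
          (complex_of_real (\<mu> - m) \<in> cspec A \<or> complex_of_real (\<mu> + m) \<in> cspec A)"
proof -
  define T where "T = (\<lambda>y. A y - scaleC (complex_of_real \<mu>) y)"
  have linA: "clin A" using sa by (simp add: bounded_selfadjoint_def bounded_clinear_clin)
  have linT: "clin T" unfolding T_def by (rule clin_shift[OF linA])
  have saA: "\<And>x y. cinner (A x) y = cinner x (A y)" using sa by (simp add: bounded_selfadjoint_def)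
  have saT: "\<And>x y. cinner (T x) y = cinner x (T y)"
    unfolding T_def by (simp add: cinner_diff_left cinner_diff_right cinner_scaleC_left cinner_scaleC_right saA)
  obtain KA where KA: "KA \<ge> 0" "\<And>x. norm (A x) \<le> KA * norm x"
    using bounded_clinear_bound sa by (metis bounded_selfadjoint_def)
  define K where "K = KA + \<bar>\<mu>\<bar>"
  have K0: "K \<ge> 0" using KA by (simp add: K_def)
  have KT: "\<And>x. norm (T x) \<le> K * norm x"
  proof -
    fix x
    have "norm (T x) \<le> norm (A x) + norm (scaleC (complex_of_real \<mu>) x)"
      unfolding T_def by (rule norm_triangle_ineq4)
    also have "\<dots> \<le> KA * norm x + \<bar>\<mu>\<bar> * norm x" using KA(2)[of x] by (simp add: norm_scaleC)
    finally show "norm (T x) \<le> K * norm x" by (simp add: K_def algebra_simps)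
  qed
  define X where "X = {norm (T y) / norm y | y. y \<noteq> 0}"
  define m where "m = Inf X"
  have Xne: "X \<noteq> {}" using nt unfolding X_def by blast
  have Xbdd: "bdd_below X" unfolding X_def by (rule bdd_belowI[of _ 0]) auto
  have m0: "m \<ge> 0" unfolding m_def using Xne by (intro cInf_greatest) (auto simp: X_def)
  have lowT: "\<And>y. m * norm y \<le> norm (T y)"
  proof -
    fix y
    show "m * norm y \<le> norm (T y)"
    proof (cases "y = 0")
      case True thus ?thesis by simp
    next
      case False
      hence "m \<le> norm (T y) / norm y" unfolding m_def using Xbdd by (intro cInf_lower) (auto simp: X_def)
      thus ?thesis using False by (simp add: field_simps)
    qed
  qed
  have appT: "\<And>e. e > 0 \<Longrightarrow> \<exists>y. y \<noteq> 0 \<and> norm (T y) < (m + e) * norm y"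
  proof -
    fix e :: real assume e: "e > 0"
    have "Inf X < m + e" using e by (simp add: m_def)
    then obtain r where "r \<in> X" "r < m + e" using cInf_less_iff[OF Xne Xbdd] by blast
    then obtain y where y: "y \<noteq> 0" "norm (T y) / norm y < m + e" unfolding X_def by blast
    thus "\<exists>y. y \<noteq> 0 \<and> norm (T y) < (m + e) * norm y" by (intro exI[of _ y]) (simp add: field_simps)
  qed
  define Q where "Q = (\<lambda>y. T (T y) - scaleC (complex_of_real (m^2)) y)"
  have linQ: "clin Q"
  proof -
    have "clin (\<lambda>y. T (T y))" using linT by (simp add: clin_def)
    thus ?thesis unfolding Q_def by (rule clin_shift)
  qed
  have saQ: "\<And>x y. cinner (Q x) y = cinner x (Q y)"
    unfolding Q_def by (simp add: cinner_diff_left cinner_diff_right cinner_scaleC_left cinner_scaleC_right saT)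
  have cTT: "\<And>y. cinner y (T (T y)) = complex_of_real ((norm (T y))^2)"
    by (metis saT cinner_self)
  have ReQ: "\<And>y. Re (cinner y (Q y)) = (norm (T y))^2 - m^2 * (norm y)^2"
    unfolding Q_def by (simp add: cinner_diff_right cinner_scaleC_right cTT cinner_self)
  have posQ: "\<And>y. 0 \<le> Re (cinner y (Q y))"
  proof -
    fix y
    have "(m * norm y)^2 \<le> (norm (T y))^2" using lowT[of y] m0 by (intro power_mono) auto
    thus "0 \<le> Re (cinner y (Q y))" unfolding ReQ by (simp add: power_mult_distrib)
  qed
  define KQ where "KQ = K^2 + m^2"
  have KQ0: "KQ \<ge> 0" by (simp add: KQ_def)
  have KQb: "\<And>x. norm (Q x) \<le> KQ * norm x"
  proof -
    fix x
    have "norm (Q x) \<le> norm (T (T x)) + norm (scaleC (complex_of_real (m^2)) x)"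
      unfolding Q_def by (rule norm_triangle_ineq4)
    also have "norm (T (T x)) \<le> K * (K * norm x)"
      using KT[of "T x"] KT[of x] K0 by (meson mult_left_mono order_trans)
    finally show "norm (Q x) \<le> KQ * norm x" using m0 by (simp add: KQ_def norm_scaleC algebra_simps power2_eq_square norm_mult)
  qed
  have smallQ: "\<And>d. d > 0 \<Longrightarrow> \<exists>y. y \<noteq> 0 \<and> norm (Q y) < d * norm y"
  proof -
    fix d :: real assume d: "d > 0"
    define C where "C = (2*m+1)*(KQ^3+1)"
    have C: "C \<ge> 1" unfolding C_def using mult_mono[of 1 "2*m+1" 1 "KQ^3+1"] m0 KQ0 by simp
    define e where "e = min 1 (d^4 / (2*C))"
    have e0: "e > 0" using d C by (simp add: e_def)
    have e1: "e \<le> 1" by (simp add: e_def)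
    have eC: "e * C \<le> d^4 / 2" using C by (simp add: e_def min_def field_simps split: if_splits)
    obtain y where y: "y \<noteq> 0" "norm (T y) < (m + e) * norm y" using appT[OF e0] by blast
    have ny: "norm y > 0" using y by simp
    have fb: "Re (cinner y (Q y)) \<le> (2*m+1) * e * (norm y)^2"
    proof -
      have "(norm (T y))^2 \<le> ((m + e) * norm y)^2" using y(2) by (intro power_mono) auto
      hence h: "(norm (T y))^2 \<le> (m + e)^2 * (norm y)^2" by (simp only: power_mult_distrib)
      hence "Re (cinner y (Q y)) \<le> ((m+e)^2 - m^2) * (norm y)^2"
        unfolding ReQ left_diff_distrib by linarith
      also have "(m+e)^2 - m^2 \<le> (2*m+1) * e"
        using e0 e1 m0 by (simp add: power2_eq_square algebra_simps mult_left_le)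
      hence "((m+e)^2 - m^2) * (norm y)^2 \<le> (2*m+1) * e * (norm y)^2"
        by (intro mult_right_mono) auto
      finally show ?thesis .
    qed
    have gb: "Re (cinner (Q y) (Q (Q y))) \<le> KQ^3 * (norm y)^2"
    proof -
      have "Re (cinner (Q y) (Q (Q y))) \<le> cmod (cinner (Q y) (Q (Q y)))" by (rule complex_Re_le_cmod)
      also have "\<dots> \<le> norm (Q y) * norm (Q (Q y))" by (rule cinner_cs)
      also have "\<dots> \<le> (KQ * norm y) * (KQ * (KQ * norm y))"
        using KQb[of y] KQb[of "Q y"] KQ0 by (intro mult_mono) (auto intro: order_trans mult_left_mono)
      finally show ?thesis by (simp add: power2_eq_square power3_eq_cube algebra_simps)
    qed
    have cs: "(cmod (cinner y (Q (Q y))))^2 \<le> Re (cinner y (Q y)) * Re (cinner (Q y) (Q (Q y)))"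
      by (rule cs_form[OF linQ saQ posQ])
    have "cinner y (Q (Q y)) = complex_of_real ((norm (Q y))^2)" by (metis saQ cinner_self)
    hence "cmod (cinner y (Q (Q y))) = (norm (Q y))^2" by (simp only: norm_of_real) simp
    hence "(cmod (cinner y (Q (Q y))))^2 = (norm (Q y))^4" by simp
    hence "(norm (Q y))^4 \<le> Re (cinner y (Q y)) * Re (cinner (Q y) (Q (Q y)))" using cs by simp
    also have "\<dots> \<le> ((2*m+1) * e * (norm y)^2) * (KQ^3 * (norm y)^2)"
      using fb gb posQ[of y] posQ[of "Q y"] by (intro mult_mono) auto
    also have "\<dots> = (e * ((2*m+1) * KQ^3)) * (norm y)^4" by (simp add: algebra_simps power2_eq_square power4_eq_xxxx)
    also have "\<dots> \<le> (d^4/2) * (norm y)^4"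
    proof (intro mult_right_mono)
      have "e * ((2*m+1) * KQ^3) \<le> e * C" unfolding C_def using e0 m0 KQ0
        by (intro mult_left_mono) (auto simp: algebra_simps)
      thus "e * ((2*m+1) * KQ^3) \<le> d^4/2" using eC by simp
    qed simp
    also have "\<dots> < (d * norm y)^4" using d ny by (simp add: power_mult_distrib)
    finally have "(norm (Q y))^4 < (d * norm y)^4" .
    hence "norm (Q y) < d * norm y" by (rule power_less_imp_less_base) (use d ny in simp)
    thus "\<exists>y. y \<noteq> 0 \<and> norm (Q y) < d * norm y" using y(1) by blast
  qed
  have Aeq: "\<And>y c. A y - scaleC (complex_of_real (\<mu> + c)) y = T y - scaleC (complex_of_real c) y"
    unfolding T_def by (simp add: scaleC_add_left algebra_simps)
  have Qfac: "\<And>y. Q y = T (T y + scaleC (complex_of_real m) y) - scaleC (complex_of_real m) (T y + scaleC (complex_of_real m) y)"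
    unfolding Q_def using linT
    by (simp add: clin_add clin_scaleC scaleC_add_right scaleC_scaleC power2_eq_square)
  show ?thesis
  proof (intro exI[of _ m] conjI m0 allI)
    fix y show "m * norm y \<le> norm (A y - scaleC (complex_of_real \<mu>) y)" using lowT[of y] by (simp add: T_def)
  next
    show "complex_of_real (\<mu> - m) \<in> cspec A \<or> complex_of_real (\<mu> + m) \<in> cspec A"
    proof (cases "\<forall>d>0. \<exists>y. y \<noteq> 0 \<and> norm (T y + scaleC (complex_of_real m) y) < d * norm y")
      case True
      have "complex_of_real (\<mu> + - m) \<in> cspec A"
      proof (rule approx_in_cspec)
        fix e :: real assume "e > 0"
        then obtain y where "y \<noteq> 0" "norm (T y + scaleC (complex_of_real m) y) < e * norm y" using True by blast
        thus "\<exists>x. x \<noteq> 0 \<and> norm (A x - scaleC (complex_of_real (\<mu> + - m)) x) < e * norm x"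
        proof -
          assume a: "y \<noteq> 0" "norm (T y + scaleC (complex_of_real m) y) < e * norm y"
          have "A y - scaleC (complex_of_real (\<mu> + - m)) y = T y + scaleC (complex_of_real m) y"
            using Aeq[of y "-m"] by (simp only: of_real_minus scaleC_minus_left diff_minus_eq_add)
          thus ?thesis using a by (intro exI[of _ y]) simp
        qed
      qed
      thus ?thesis by simp
    next
      case False
      then obtain d where d: "d > 0" "\<And>y. y \<noteq> 0 \<Longrightarrow> d * norm y \<le> norm (T y + scaleC (complex_of_real m) y)"
        by (auto simp: not_less)
      have "complex_of_real (\<mu> + m) \<in> cspec A"
      proof (rule approx_in_cspec)
        fix e :: real assume e: "e > 0"
        obtain y where y: "y \<noteq> 0" "norm (Q y) < (d*e) * norm y" using smallQ[of "d*e"] d e by auto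
        define w where "w = T y + scaleC (complex_of_real m) y"
        have wb: "d * norm y \<le> norm w" using d(2)[OF y(1)] by (simp add: w_def)
        have "norm w > 0" using wb d y(1) by (metis mult_pos_pos zero_less_norm_iff order_less_le_trans)
        hence w0: "w \<noteq> 0" by simp
        have "norm (A w - scaleC (complex_of_real (\<mu> + m)) w) = norm (Q y)"
          using Aeq[of w m] Qfac[of y] by (simp only: w_def)
        also have "\<dots> < e * (d * norm y)" using y(2) by (simp add: algebra_simps)
        also have "\<dots> \<le> e * norm w" using wb e by (intro mult_left_mono) auto
        finally show "\<exists>x. x \<noteq> 0 \<and> norm (A x - scaleC (complex_of_real (\<mu> + m)) x) < e * norm x"
          using w0 by blast
      qed
      thus ?thesis by simp
    qed
  qed
qed



lemma not_in_cspec: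
  fixes T :: "'c::complex_normed \<Rightarrow> 'c"
  assumes lin: "clin T" and su: "surj (\<lambda>x. T x - scaleC z x)" and c: "c > 0"
    and lb: "\<And>x. c * norm x \<le> norm (T x - scaleC z x)"
  shows "z \<notin> cspec T"
proof -
  define G where "G = (\<lambda>x. T x - scaleC z x)"
  have linG: "clin G" unfolding G_def by (rule clin_shift[OF lin])
  have inj: "inj G"
  proof (rule injI)
    fix x x' assume "G x = G x'"
    hence "G (x - x') = 0" using linG by (simp add: clin_diff)
    hence "c * norm (x - x') \<le> 0" using lb[of "x - x'"] by (simp add: G_def)
    thus "x = x'" using c by (simp add: mult_le_0_iff)
  qed
  define S where "S = inv G"
  have suG: "surj G" using su by (simp add: G_def)
  have GS: "\<And>y. G (S y) = y" unfolding S_def by (rule surj_f_inv_f[OF suG])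
  have SG: "\<And>x. S (G x) = x" unfolding S_def using inj by simp
  have "bounded_clinear S"
    unfolding bounded_clinear_def
  proof (intro conjI allI)
    fix a b
    show "S (a + b) = S a + S b"
      using inj by (rule injD) (simp add: GS clin_add[OF linG])
  next
    fix k a
    show "S (scaleC k a) = scaleC k (S a)"
      using inj by (rule injD) (simp add: GS clin_scaleC[OF linG])
  next
    show "\<exists>K. \<forall>x. norm (S x) \<le> norm x * K"
    proof (intro exI allI)
      fix y
      have "c * norm (S y) \<le> norm y" using lb[of "S y"] GS[of y] by (simp add: G_def)
      thus "norm (S y) \<le> norm y * (1/c)" using c by (simp add: field_simps)
    qed
  qed
  moreover have "\<forall>x. S (T x - scaleC z x) = x" using SG by (simp add: G_def)
  moreover have "\<forall>y. T (S y) - scaleC z (S y) = y" using GS by (simp add: G_def)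
  ultimately show ?thesis unfolding cspec_def by blast
qed

lemma propagate:
  fixes T :: "'c::{complex_normed,complete_space} \<Rightarrow> 'c"
  assumes lin: "clin T" and su: "surj (\<lambda>x. T x - scaleC z0 x)" and c: "c > 0"
    and lb: "\<And>x. c * norm x \<le> norm (T x - scaleC z0 x)" and close: "cmod (z - z0) < c"
  shows "surj (\<lambda>x. T x - scaleC z x)"
proof -
  define G where "G = (\<lambda>x. T x - scaleC z0 x)"
  have linG: "clin G" unfolding G_def by (rule clin_shift[OF lin])
  define R where "R = inv G"
  have suG: "surj G" using su by (simp add: G_def)
  have GR: "\<And>y. G (R y) = y" unfolding R_def by (rule surj_f_inv_f[OF suG])
  show ?thesis
    unfolding surj_def
  proof (rule allI)
    fix y
    define F where "F = (\<lambda>x. R (y + scaleC (z - z0) x))"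
    define k where "k = cmod (z - z0) / c"
    have k: "0 \<le> k" "k < 1" using c close by (auto simp: k_def)
    have "\<forall>x x'. dist (F x) (F x') \<le> k * dist x x'"
    proof (intro allI)
      fix x x'
      have "G (F x - F x') = scaleC (z - z0) (x - x')"
        unfolding F_def using linG GR by (simp add: clin_diff scaleC_diff_right)
      hence "c * norm (F x - F x') \<le> cmod (z - z0) * norm (x - x')"
        using lb[of "F x - F x'"] by (simp add: G_def norm_scaleC)
      thus "dist (F x) (F x') \<le> k * dist x x'" using c by (simp add: dist_norm k_def field_simps)
    qed
    then obtain x where fx: "F x = x" using banach_fix_type[OF k] by blast
    have "G x = y + scaleC (z - z0) x" using GR fx unfolding F_def by metis
    hence "T x - scaleC z0 x = y + (scaleC z x - scaleC z0 x)" by (simp add: G_def scaleC_diff_left)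
    hence "T x - scaleC z x = y" by (simp add: algebra_simps)
    thus "\<exists>x. y = T x - scaleC z x" by metis
  qed
qed

lemma large_surj:
  fixes T :: "'c::{complex_normed,complete_space} \<Rightarrow> 'c"
  assumes lin: "clin T" and K: "K \<ge> 0" "\<And>x. norm (T x) \<le> K * norm x" and z: "cmod z > K"
  shows "surj (\<lambda>x. T x - scaleC z x)"
  unfolding surj_def
proof (rule allI)
  fix y
  have z0: "z \<noteq> 0" using z K by auto
  define F where "F = (\<lambda>x. scaleC (1/z) (T x - y))"
  define k where "k = K / cmod z"
  have zp: "0 < cmod z" using z K by linarith
  have k: "0 \<le> k" "k < 1" using z K zp by (auto simp: k_def)
  have "\<forall>x x'. dist (F x) (F x') \<le> k * dist x x'"
  proof (intro allI)
    fix x x'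
    have "F x - F x' = scaleC (1/z) (T (x - x'))"
      unfolding F_def using lin by (simp add: clin_diff scaleC_diff_right[symmetric])
    hence "norm (F x - F x') = norm (T (x - x')) / cmod z" by (simp add: norm_scaleC norm_divide)
    also have "\<dots> \<le> K * norm (x - x') / cmod z" using K(2) by (simp add: divide_right_mono)
    finally show "dist (F x) (F x') \<le> k * dist x x'" by (simp add: dist_norm k_def)
  qed
  then obtain x where fx: "F x = x" using banach_fix_type[OF k] by blast
  have "scaleC z x = scaleC z (scaleC (1/z) (T x - y))" using fx unfolding F_def by simp
  also have "\<dots> = T x - y" using z0 by (simp add: scaleC_scaleC scaleC_one)
  finally have "T x - scaleC z x = y" by (simp add: algebra_simps)
  thus "\<exists>x. y = T x - scaleC z x" by metis
qed



lemma key_real_case: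
  fixes p q N e b d m0 m1 w :: real
  assumes nn: "0 \<le> p" "0 \<le> q" "0 \<le> e" "0 \<le> b" "0 \<le> m0" "0 \<le> m1" "0 < w" "0 \<le> N"
    and NN: "N^2 = p^2 + q^2"
    and im: "w * \<bar>p^2 - q^2\<bar> \<le> 2*e*N"
    and e0: "m0 * p \<le> b*q + e" and e1: "m1 * q \<le> b*p + e"
    and dm: "d \<le> m0 + m1" and bd: "2*b < d" and pq: "p \<le> q"
  shows "(d-2*b)*w*N \<le> 4*e*(d-b+w)"
proof -
  have h1: "d*p \<le> b*(p+q) + 2*e"
  proof -
    have "d*p \<le> (m0+m1)*p" using dm nn by (intro mult_right_mono) auto
    also have "\<dots> = m0*p + m1*p" by (simp add: algebra_simps)
    also have "m1*p \<le> m1*q" using pq nn by (intro mult_left_mono) auto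
    finally show ?thesis using e0 e1 by (simp add: algebra_simps)
  qed
  have h2: "N \<le> p + q"
  proof -
    have "N^2 \<le> (p+q)^2" using NN nn by (simp add: power2_eq_square algebra_simps)
    thus ?thesis by (rule power2_le_imp_le) (use nn in simp)
  qed
  have h4: "N \<le> 2*q"
  proof -
    have "N^2 \<le> (2*q)^2" using NN nn pq by (simp add: power2_eq_square algebra_simps mult_mono)
    thus ?thesis by (rule power2_le_imp_le) (use nn in simp)
  qed
  have h3: "w*(q-p) \<le> 2*e"
  proof (cases "p + q = 0")
    case True hence "q - p = 0" using nn by linarith
    thus ?thesis using nn by simp
  next
    case False
    hence pos: "p + q > 0" using nn by simp
    have "p^2 \<le> q^2" using pq nn by (intro power_mono) auto
    hence "\<bar>p^2-q^2\<bar> = q^2 - p^2" by simp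
    hence "w*(q-p)*(p+q) = w*\<bar>p^2-q^2\<bar>"
      by (simp add: power2_eq_square algebra_simps)
    also have "\<dots> \<le> 2*e*N" by (rule im)
    also have "\<dots> \<le> 2*e*(p+q)" using h2 nn by (intro mult_left_mono) auto
    finally show ?thesis using pos by simp
  qed
  have "(d-2*b)*(w*p) \<le> b*(w*(q-p)) + 2*e*w"
  proof -
    have "(d-2*b)*p \<le> b*(q-p) + 2*e" using h1 by (simp add: algebra_simps)
    hence "w*((d-2*b)*p) \<le> w*(b*(q-p) + 2*e)" using nn by (intro mult_left_mono) auto
    thus ?thesis by (simp add: algebra_simps)
  qed
  also have "\<dots> \<le> b*(2*e) + 2*e*w" using h3 nn by (simp add: mult_left_mono)
  finally have A: "(d-2*b)*(w*p) \<le> 2*e*b + 2*e*w" by (simp add: algebra_simps)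
  have B: "w*N/2 - 2*e \<le> w*p"
  proof -
    have "w*N \<le> w*(2*q)" using h4 nn by (intro mult_left_mono) auto
    thus ?thesis using h3 by (simp add: algebra_simps)
  qed
  have "(d-2*b)*(w*N/2 - 2*e) \<le> (d-2*b)*(w*p)" using B bd by (intro mult_left_mono) auto
  with A have "(d-2*b)*(w*N/2 - 2*e) \<le> 2*e*b + 2*e*w" by linarith
  hence "(d-2*b)*(w*N) - 4*e*(d-2*b) \<le> 4*e*b + 4*e*w" by (simp add: field_simps)
  thus ?thesis by (simp add: algebra_simps)
qed

lemma key_real:
  fixes p q N e b d m0 m1 w :: real
  assumes nn: "0 \<le> p" "0 \<le> q" "0 \<le> e" "0 \<le> b" "0 \<le> m0" "0 \<le> m1" "0 < w" "0 \<le> N"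
    and NN: "N^2 = p^2 + q^2"
    and im: "w * \<bar>p^2 - q^2\<bar> \<le> 2*e*N"
    and e0: "m0 * p \<le> b*q + e" and e1: "m1 * q \<le> b*p + e"
    and dm: "d \<le> m0 + m1" and bd: "2*b < d"
  shows "(d-2*b)*w*N \<le> 4*e*(d-b+w)"
proof (cases "p \<le> q")
  case True thus ?thesis using key_real_case[OF nn NN im e0 e1 dm bd] by blast
next
  case False
  have im': "w * \<bar>q^2 - p^2\<bar> \<le> 2*e*N" using im by (simp add: abs_minus_commute)
  have NN': "N^2 = q^2 + p^2" using NN by simp
  have dm': "d \<le> m1 + m0" using dm by simp
  show ?thesis using key_real_case[OF nn(2,1,3,4,6,5,7,8) NN' im' e1 e0 dm' bd] False by simp
qed

lemma sa_imag_shift: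
  fixes T :: "'a::complex_inner \<Rightarrow> 'a"
  assumes lin: "clin T" and sa: "\<And>x y. cinner (T x) y = cinner x (T y)"
  shows "norm (T x - scaleC (complex_of_real \<mu>) x) \<le> norm (T x - scaleC (Complex \<mu> t) x)"
proof -
  define u where "u = T x - scaleC (complex_of_real \<mu>) x"
  have ux: "cinner u x = cinner x u"
    unfolding u_def by (simp add: cinner_diff_left cinner_diff_right cinner_scaleC_left cinner_scaleC_right sa)
  have eq: "T x - scaleC (Complex \<mu> t) x = u - scaleC (\<i> * complex_of_real t) x"
  proof -
    have "Complex \<mu> t = complex_of_real \<mu> + \<i> * complex_of_real t" by (simp add: complex_eq_iff)
    thus ?thesis unfolding u_def by (simp add: scaleC_add_left algebra_simps)
  qed
  have "cinner (u - scaleC (\<i> * complex_of_real t) x) (u - scaleC (\<i> * complex_of_real t) x)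
      = cinner u u + complex_of_real (t^2) * cinner x x"
    by (simp add: cinner_diff_left cinner_diff_right cinner_scaleC_left cinner_scaleC_right ux
        algebra_simps power2_eq_square)
  hence "(norm (T x - scaleC (Complex \<mu> t) x))^2 = (norm u)^2 + t^2 * (norm x)^2"
    unfolding eq by (metis Re_cinner_self Re_complex_of_real cinner_self of_real_mult of_real_add plus_complex.sel(1))
  hence "(norm u)^2 \<le> (norm (T x - scaleC (Complex \<mu> t) x))^2" by simp
  thus ?thesis unfolding u_def by (rule power2_le_imp_le) simp
qed

lemma adjoint_bounded:
  fixes B :: "'b::chilbert \<Rightarrow> 'a::chilbert" and Bs :: "'a \<Rightarrow> 'b"
  assumes bB: "bounded_clinear B" and adj: "is_adjoint B Bs"
  shows "bounded_clinear Bs"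
proof -
  have ad: "\<And>x y. cinner (B x) y = cinner x (Bs y)" using adj by (simp add: is_adjoint_def)
  have nd: "\<And>u::'b. (\<And>x. cinner x u = 0) \<Longrightarrow> u = 0" using cinner_zero_iff by blast
  have linB: "clin B" using bB by (rule bounded_clinear_clin)
  obtain K where K: "K \<ge> 0" "\<And>x. norm (B x) \<le> K * norm x" using bounded_clinear_bound[OF bB] by blast
  show ?thesis unfolding bounded_clinear_def
  proof (intro conjI allI)
    fix a c
    have "Bs (a + c) - (Bs a + Bs c) = 0"
      by (rule nd) (simp add: cinner_diff_right cinner_add_right ad[symmetric] cinner_add_right)
    thus "Bs (a + c) = Bs a + Bs c" by simp
  next
    fix k a
    have "Bs (scaleC k a) - scaleC k (Bs a) = 0"
      by (rule nd) (simp add: cinner_diff_right cinner_scaleC_right ad[symmetric])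
    thus "Bs (scaleC k a) = scaleC k (Bs a)" by simp
  next
    show "\<exists>K. \<forall>x. norm (Bs x) \<le> norm x * K"
    proof (intro exI allI)
      fix y
      have "(norm (Bs y))^2 = Re (cinner (B (Bs y)) y)" by (simp add: ad Re_cinner_self)
      also have "\<dots> \<le> cmod (cinner (B (Bs y)) y)" by (rule complex_Re_le_cmod)
      also have "\<dots> \<le> norm (B (Bs y)) * norm y" by (rule cinner_cs)
      also have "\<dots> \<le> (K * norm (Bs y)) * norm y" using K(2) by (intro mult_right_mono) auto
      finally have h: "norm (Bs y) * norm (Bs y) \<le> norm (Bs y) * (norm y * K)"
        by (simp add: power2_eq_square algebra_simps)
      show "norm (Bs y) \<le> norm y * K"
      proof (cases "norm (Bs y) = 0")
        case True thus ?thesis using K by simp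
      next
        case False thus ?thesis using h by (simp add: mult_le_cancel_left)
      qed
    qed
  qed
qed



lemma clin_scaleR: "clin f \<Longrightarrow> f (scaleR r x) = scaleR r (f x)"
  by (simp add: scaleR_scaleC clin_scaleC)

lemma norm_fst_le': "norm (fst x) \<le> norm x" by (metis norm_fst_le prod.collapse)
lemma norm_snd_le': "norm (snd x) \<le> norm x" by (metis norm_snd_le prod.collapse)

lemma blockV_eq: "blockV B Bs x = (B (snd x), - Bs (fst x))"
  by (simp add: blockV_def case_prod_unfold)
lemma blockL_eq: "blockL A0 A1 B Bs x = (A0 (fst x) + B (snd x), - Bs (fst x) + A1 (snd x))"
  by (simp add: blockL_def case_prod_unfold)

lemma sa_Im0:
  fixes A :: "'a::chilbert \<Rightarrow> 'a"
  assumes "bounded_selfadjoint A" shows "Im (cinner x (A x)) = 0"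
proof -
  have e: "cinner x (A x) = cnj (cinner x (A x))" using assms
    by (metis bounded_selfadjoint_def cinner_commute)
  have "Im (cinner x (A x)) = - Im (cinner x (A x))" using arg_cong[OF e, of Im] by simp
  thus ?thesis by simp
qed

lemma blockV_bl:
  fixes B :: "'b::chilbert \<Rightarrow> 'a::chilbert" and Bs :: "'a \<Rightarrow> 'b"
  assumes linB: "clin B" and linBs: "clin Bs" and KB: "\<And>u. norm (B u) \<le> K * norm u"
    and KBs: "\<And>u. norm (Bs u) \<le> K * norm u" and K0: "0 \<le> K"
  shows "bounded_linear (blockV B Bs)"
proof (rule bounded_linear_intro[where K = "2*K"])
  fix x y :: "'a \<times> 'b"
  show "blockV B Bs (x + y) = blockV B Bs x + blockV B Bs y"
    by (simp add: blockV_eq clin_add[OF linB] clin_add[OF linBs])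
next
  fix r and x :: "'a \<times> 'b"
  show "blockV B Bs (scaleR r x) = scaleR r (blockV B Bs x)"
    by (simp add: blockV_eq clin_scaleR[OF linB] clin_scaleR[OF linBs])
next
  fix x :: "'a \<times> 'b"
  have "norm (blockV B Bs x) \<le> norm (B (snd x)) + norm (- Bs (fst x))"
    unfolding blockV_eq by (rule norm_Pair_le)
  also have "\<dots> \<le> K * norm (snd x) + K * norm (fst x)" using KB KBs by (simp add: add_mono)
  also have "\<dots> \<le> K * norm x + K * norm x"
  proof -
    show ?thesis using K0 using norm_fst_le'[of x] norm_snd_le'[of x] by (intro add_mono mult_left_mono) auto
  qed
  finally show "norm (blockV B Bs x) \<le> norm x * (2*K)" by (simp add: algebra_simps)
qed

lemma block_lower:
  fixes A0 :: "'a::chilbert \<Rightarrow> 'a" and A1 :: "'b::chilbert \<Rightarrow> 'b"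
    and B :: "'b \<Rightarrow> 'a" and Bs :: "'a \<Rightarrow> 'b"
  assumes sa0: "bounded_selfadjoint A0" and sa1: "bounded_selfadjoint A1"
    and linB: "clin B" and linBs: "clin Bs" and adj: "is_adjoint B Bs"
    and bB: "\<And>u. norm (B u) \<le> b * norm u" and bBs: "\<And>u. norm (Bs u) \<le> b * norm u"
    and hm0: "\<And>u. m0 * norm u \<le> norm (A0 u - scaleC (complex_of_real \<mu>) u)"
    and hm1: "\<And>u. m1 * norm u \<le> norm (A1 u - scaleC (complex_of_real \<mu>) u)"
    and nn: "0 \<le> b" "0 \<le> m0" "0 \<le> m1" "0 < w" and wt: "w \<le> \<bar>t\<bar>"
    and dm: "d \<le> m0 + m1" and bd: "2*b < d"
  shows "(d-2*b)*w*norm x \<le> 4*norm (blockL A0 A1 B Bs x - scaleC (Complex \<mu> t) x)*(d-b+w)"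
proof -
  obtain x0 x1 where x: "x = (x0, x1)" by (cases x)
  define zt where "zt = Complex \<mu> t"
  define y0 where "y0 = A0 x0 + B x1 - scaleC zt x0"
  define y1 where "y1 = - Bs x0 + A1 x1 - scaleC zt x1"
  have yeq: "blockL A0 A1 B Bs x - scaleC zt x = (y0, y1)"
    by (simp add: x blockL_def scaleC_prod_def y0_def y1_def)
  define e where "e = norm (y0, y1)"
  define p where "p = norm x0"
  define q where "q = norm x1"
  define N where "N = norm x"
  have NN: "N^2 = p^2 + q^2" unfolding N_def p_def q_def x norm_Pair by simp
  have ey0: "norm y0 \<le> e" unfolding e_def by (rule norm_fst_le)
  have ey1: "norm y1 \<le> e" unfolding e_def by (rule norm_snd_le)
  have pN: "p \<le> N" unfolding p_def N_def x by (rule norm_fst_le)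
  have qN: "q \<le> N" unfolding q_def N_def x by (rule norm_snd_le)
  have lin0: "clin A0" and lin1: "clin A1" using sa0 sa1 by (auto simp: bounded_selfadjoint_def bounded_clinear_clin)
  have s0: "\<And>x y. cinner (A0 x) y = cinner x (A0 y)" using sa0 by (simp add: bounded_selfadjoint_def)
  have s1: "\<And>x y. cinner (A1 x) y = cinner x (A1 y)" using sa1 by (simp add: bounded_selfadjoint_def)
  have e0: "m0 * p \<le> b*q + e"
  proof -
    have "m0 * p \<le> norm (A0 x0 - scaleC (complex_of_real \<mu>) x0)" using hm0[of x0] by (simp add: p_def)
    also have "\<dots> \<le> norm (A0 x0 - scaleC zt x0)" unfolding zt_def by (rule sa_imag_shift[OF lin0 s0])
    also have "A0 x0 - scaleC zt x0 = y0 - B x1" by (simp add: y0_def algebra_simps)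
    also have "norm (y0 - B x1) \<le> norm y0 + norm (B x1)" by (rule norm_triangle_ineq4)
    also have "\<dots> \<le> e + b*q" using ey0 bB[of x1] by (simp add: q_def)
    finally show ?thesis by simp
  qed
  have e1: "m1 * q \<le> b*p + e"
  proof -
    have "m1 * q \<le> norm (A1 x1 - scaleC (complex_of_real \<mu>) x1)" using hm1[of x1] by (simp add: q_def)
    also have "\<dots> \<le> norm (A1 x1 - scaleC zt x1)" unfolding zt_def by (rule sa_imag_shift[OF lin1 s1])
    also have "A1 x1 - scaleC zt x1 = y1 + Bs x0" by (simp add: y1_def algebra_simps)
    also have "norm (y1 + Bs x0) \<le> norm y1 + norm (Bs x0)" by (rule norm_triangle_ineq)
    also have "\<dots> \<le> e + b*p" using ey1 bBs[of x0] by (simp add: p_def)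
    finally show ?thesis by simp
  qed
  have c0: "cinner x0 y0 = cinner x0 (A0 x0) + cinner x0 (B x1) - zt * complex_of_real (p^2)"
    by (simp add: y0_def cinner_add_right cinner_diff_right cinner_scaleC_right cinner_self p_def)
  have c1: "cinner x1 y1 = - cinner x1 (Bs x0) + cinner x1 (A1 x1) - zt * complex_of_real (q^2)"
    by (simp add: y1_def cinner_add_right cinner_diff_right cinner_scaleC_right cinner_minus_right
        cinner_self q_def)
  have adjx: "cinner x1 (Bs x0) = cnj (cinner x0 (B x1))"
    using adj by (metis is_adjoint_def cinner_commute)
  have "Im (cinner x0 y0 - cinner x1 y1) = - t * (p^2 - q^2)"
    unfolding c0 c1 adjx using sa_Im0[OF sa0, of x0] sa_Im0[OF sa1, of x1]
    by (simp add: zt_def algebra_simps)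
  hence "\<bar>t\<bar> * \<bar>p^2 - q^2\<bar> = \<bar>Im (cinner x0 y0 - cinner x1 y1)\<bar>" by (simp add: abs_mult)
  also have "\<dots> \<le> cmod (cinner x0 y0 - cinner x1 y1)" by (rule abs_Im_le_cmod)
  also have "\<dots> \<le> cmod (cinner x0 y0) + cmod (cinner x1 y1)" by (rule norm_triangle_ineq4)
  also have "\<dots> \<le> p * norm y0 + q * norm y1" unfolding p_def q_def by (intro add_mono cinner_cs)
  also have "\<dots> \<le> N * e + N * e"
    using pN qN ey0 ey1 by (intro add_mono mult_mono) (auto simp: p_def q_def N_def)
  finally have imt: "\<bar>t\<bar> * \<bar>p^2 - q^2\<bar> \<le> 2*e*N" by (simp add: algebra_simps)
  have im: "w * \<bar>p^2 - q^2\<bar> \<le> 2*e*N"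
    using imt wt by (meson abs_ge_zero mult_right_mono order_trans)
  have "(d-2*b)*w*N \<le> 4*e*(d-b+w)"
    by (rule key_real[OF _ _ _ nn(1) nn(2) nn(3) nn(4) _ NN im e0 e1 dm bd])
       (auto simp: p_def q_def e_def N_def)
  thus ?thesis using yeq by (simp add: N_def e_def zt_def algebra_simps)
qed



lemma blockL_clin:
  assumes "clin A0" "clin A1" "clin B" "clin Bs"
  shows "clin (blockL A0 A1 B Bs)"
  unfolding clin_def
proof (intro conjI allI)
  fix x y :: "'a \<times> 'b"
  show "blockL A0 A1 B Bs (x + y) = blockL A0 A1 B Bs x + blockL A0 A1 B Bs y"
    using assms by (simp add: blockL_eq clin_add ac_simps)
next
  fix c and x :: "'a \<times> 'b"
  show "blockL A0 A1 B Bs (scaleC c x) = scaleC c (blockL A0 A1 B Bs x)"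
    using assms by (simp add: blockL_eq clin_scaleC scaleC_prod_def scaleC_add_right scaleC_minus_right scaleC_diff_right)
qed

lemma blockL_bound:
  fixes A0 :: "'a::chilbert \<Rightarrow> 'a" and A1 :: "'b::chilbert \<Rightarrow> 'b"
    and B :: "'b \<Rightarrow> 'a" and Bs :: "'a \<Rightarrow> 'b"
  assumes K0: "0 \<le> K" and k0: "\<And>u. norm (A0 u) \<le> K * norm u" and k1: "\<And>u. norm (A1 u) \<le> K * norm u"
    and kB: "\<And>u. norm (B u) \<le> K * norm u" and kBs: "\<And>u. norm (Bs u) \<le> K * norm u"
  shows "norm (blockL A0 A1 B Bs x) \<le> (4*K) * norm x"
proof -
  have f: "K * norm (fst x) \<le> K * norm x" and s: "K * norm (snd x) \<le> K * norm x"
    using K0 norm_fst_le'[of x] norm_snd_le'[of x] by (auto intro: mult_left_mono)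
  have "norm (blockL A0 A1 B Bs x) \<le> norm (A0 (fst x) + B (snd x)) + norm (- Bs (fst x) + A1 (snd x))"
    unfolding blockL_eq by (rule norm_Pair_le)
  also have "\<dots> \<le> (norm (A0 (fst x)) + norm (B (snd x))) + (norm (Bs (fst x)) + norm (A1 (snd x)))"
    by (intro add_mono norm_triangle_ineq[THEN order_trans]) (auto intro: norm_triangle_ineq)
  also have "\<dots> \<le> (K * norm x + K * norm x) + (K * norm x + K * norm x)"
    using k0[of "fst x"] k1[of "snd x"] kB[of "snd x"] kBs[of "fst x"] f s by (intro add_mono) linarith+
  finally show ?thesis by (simp add: algebra_simps)
qed

lemma nontrivial_of_spec:
  fixes A :: "'a::chilbert \<Rightarrow> 'a"
  assumes "cspec A \<noteq> {}" shows "\<exists>x::'a. x \<noteq> 0"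
proof (rule ccontr)
  assume "\<not> (\<exists>x::'a. x \<noteq> 0)"
  hence all0: "\<And>x::'a. x = 0" by blast
  have "\<And>z. z \<notin> cspec A"
  proof -
    fix z
    have "bounded_clinear (\<lambda>y::'a. 0::'a)" by (auto simp: bounded_clinear_def intro: exI[of _ 0])
    moreover have "\<forall>x. (\<lambda>y::'a. 0::'a) (A x - scaleC z x) = x" using all0 by metis
    moreover have "\<forall>y. A ((\<lambda>y::'a. 0::'a) y) - scaleC z ((\<lambda>y::'a. 0::'a) y) = y" using all0 by metis
    ultimately show "z \<notin> cspec A" unfolding cspec_def by blast
  qed
  thus False using assms by blast
qed

lemma spec_point_form:
  assumes "complex_of_real (\<mu> - m) \<in> S \<or> complex_of_real (\<mu> + m) \<in> S" "0 \<le> m"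
  shows "\<exists>r. complex_of_real (\<mu> + r) \<in> S \<and> \<bar>r\<bar> = m"
  using assms by (metis abs_minus_cancel abs_of_nonneg diff_conv_add_uminus)

theorem mainTheorem12:
  fixes A0 :: "'a::chilbert \<Rightarrow> 'a" and A1 :: "'b::chilbert \<Rightarrow> 'b"
    and B :: "'b \<Rightarrow> 'a" and Bs :: "'a \<Rightarrow> 'b"
  assumes "bounded_selfadjoint A0" and "bounded_selfadjoint A1"
    and "bounded_clinear B" and "is_adjoint B Bs"
    and "setdist (cspec A0) (cspec A1) > 0"
    and "onorm (blockV B Bs) < setdist (cspec A0) (cspec A1) / 2"
  shows "cspec (blockL A0 A1 B Bs) \<subseteq> \<real>"
proof
  note sa0 = assms(1) and sa1 = assms(2) and bcB = assms(3) and adj = assms(4)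
  define d where "d = setdist (cspec A0) (cspec A1)"
  define L where "L = blockL A0 A1 B Bs"
  have dpos: "d > 0" using assms(5) by (simp add: d_def)
  have ne0: "cspec A0 \<noteq> {}" and ne1: "cspec A1 \<noteq> {}" using dpos by (auto simp: d_def)
  have nt0: "\<exists>x::'a. x \<noteq> 0" by (rule nontrivial_of_spec[OF ne0])
  have nt1: "\<exists>x::'b. x \<noteq> 0" by (rule nontrivial_of_spec[OF ne1])
  have bcBs: "bounded_clinear Bs" by (rule adjoint_bounded[OF bcB adj])
  have linB: "clin B" and linBs: "clin Bs" using bcB bcBs by (auto intro: bounded_clinear_clin)
  have lin0: "clin A0" and lin1: "clin A1" using sa0 sa1 by (auto simp: bounded_selfadjoint_def bounded_clinear_clin)
  obtain K0 where K0: "K0 \<ge> 0" "\<And>u. norm (A0 u) \<le> K0 * norm u"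
    using bounded_clinear_bound sa0 by (metis bounded_selfadjoint_def)
  obtain K1 where K1: "K1 \<ge> 0" "\<And>u. norm (A1 u) \<le> K1 * norm u"
    using bounded_clinear_bound sa1 by (metis bounded_selfadjoint_def)
  obtain KB where KB: "KB \<ge> 0" "\<And>u. norm (B u) \<le> KB * norm u" using bounded_clinear_bound[OF bcB] by blast
  obtain KBs where KBs: "KBs \<ge> 0" "\<And>u. norm (Bs u) \<le> KBs * norm u" using bounded_clinear_bound[OF bcBs] by blast
  define KM where "KM = K0 + K1 + KB + KBs"
  have KM0: "KM \<ge> 0" using K0 K1 KB KBs by (simp add: KM_def)
  have le: "\<And>k u. 0 \<le> k \<Longrightarrow> k \<le> KM \<Longrightarrow> k * norm u \<le> KM * norm u"
    by (intro mult_right_mono) auto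
  have lK: "K0 \<le> KM" "K1 \<le> KM" "KB \<le> KM" "KBs \<le> KM" using K0 K1 KB KBs by (auto simp: KM_def)
  have kk: "\<And>u. norm (A0 u) \<le> KM * norm u" "\<And>u. norm (A1 u) \<le> KM * norm u"
    "\<And>u. norm (B u) \<le> KM * norm u" "\<And>u. norm (Bs u) \<le> KM * norm u"
    by (rule order_trans[OF K0(2) le[OF K0(1) lK(1)]], rule order_trans[OF K1(2) le[OF K1(1) lK(2)]],
        rule order_trans[OF KB(2) le[OF KB(1) lK(3)]], rule order_trans[OF KBs(2) le[OF KBs(1) lK(4)]])
  have blV: "bounded_linear (blockV B Bs)" by (rule blockV_bl[OF linB linBs kk(3) kk(4) KM0])
  define b where "b = onorm (blockV B Bs)"
  have b0: "0 \<le> b" unfolding b_def by (rule onorm_pos_le[OF blV])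
  have bd: "2*b < d" using assms(6) by (simp add: b_def d_def)
  have bB: "\<And>u. norm (B u) \<le> b * norm u"
  proof -
    fix u
    have "norm (blockV B Bs (0, u)) \<le> b * norm (0::'a, u)" unfolding b_def by (rule onorm[OF blV])
    thus "norm (B u) \<le> b * norm u" by (simp add: blockV_eq clin_zero[OF linBs])
  qed
  have bBs: "\<And>u. norm (Bs u) \<le> b * norm u"
  proof -
    fix u
    have "norm (blockV B Bs (u, 0)) \<le> b * norm (u, 0::'b)" unfolding b_def by (rule onorm[OF blV])
    thus "norm (Bs u) \<le> b * norm u" by (simp add: blockV_eq clin_zero[OF linB])
  qed
  have linL: "clin L" unfolding L_def by (rule blockL_clin[OF lin0 lin1 linB linBs])
  have KL: "\<And>x. norm (L x) \<le> (4*KM) * norm x" unfolding L_def by (rule blockL_bound[OF KM0 kk])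
  fix z assume zL: "z \<in> cspec (blockL A0 A1 B Bs)"
  show "z \<in> \<real>"
  proof (rule ccontr)
    assume nz: "z \<notin> \<real>"
    define \<mu> where "\<mu> = Re z"
    define \<nu> where "\<nu> = Im z"
    have nu0: "\<nu> \<noteq> 0" using nz by (simp add: \<nu>_def complex_is_Real_iff)
    have zeq: "z = Complex \<mu> \<nu>" by (simp add: \<mu>_def \<nu>_def)
    obtain m0 where m0: "m0 \<ge> 0" "\<And>y. m0 * norm y \<le> norm (A0 y - scaleC (complex_of_real \<mu>) y)"
      "complex_of_real (\<mu> - m0) \<in> cspec A0 \<or> complex_of_real (\<mu> + m0) \<in> cspec A0"
      using sa_spec_point[OF sa0 nt0, of \<mu>] by blast
    obtain m1 where m1: "m1 \<ge> 0" "\<And>y. m1 * norm y \<le> norm (A1 y - scaleC (complex_of_real \<mu>) y)"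
      "complex_of_real (\<mu> - m1) \<in> cspec A1 \<or> complex_of_real (\<mu> + m1) \<in> cspec A1"
      using sa_spec_point[OF sa1 nt1, of \<mu>] by blast
    obtain r0 where r0: "complex_of_real (\<mu> + r0) \<in> cspec A0" "\<bar>r0\<bar> = m0"
      using spec_point_form[OF m0(3) m0(1)] by blast
    obtain r1 where r1: "complex_of_real (\<mu> + r1) \<in> cspec A1" "\<bar>r1\<bar> = m1"
      using spec_point_form[OF m1(3) m1(1)] by blast
    have "d \<le> dist (complex_of_real (\<mu> + r0)) (complex_of_real (\<mu> + r1))"
      unfolding d_def by (rule setdist_le_dist[OF r0(1) r1(1)])
    also have "\<dots> = \<bar>r0 - r1\<bar>" by (simp add: dist_norm of_real_diff[symmetric] del: of_real_diff)
    also have "\<dots> \<le> m0 + m1" using r0(2) r1(2) by linarith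
    finally have dm: "d \<le> m0 + m1" .
    define w where "w = \<bar>\<nu>\<bar>"
    have w0: "w > 0" using nu0 by (simp add: w_def)
    define c where "c = (d-2*b)*w / (4*(d-b+w))"
    have den: "4*(d-b+w) > 0" using bd b0 w0 by simp
    have c0: "c > 0" unfolding c_def using bd w0 den by (intro divide_pos_pos) auto
    have lower: "\<And>t x. w \<le> \<bar>t\<bar> \<Longrightarrow> c * norm x \<le> norm (L x - scaleC (Complex \<mu> t) x)"
    proof -
      fix t x assume wt: "w \<le> \<bar>t\<bar>"
      have "(d-2*b)*w*norm x \<le> 4*norm (L x - scaleC (Complex \<mu> t) x)*(d-b+w)"
        unfolding L_def
        by (rule block_lower[OF sa0 sa1 linB linBs adj bB bBs m0(2) m1(2) b0 m0(1) m1(1) w0 wt dm bd])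
      thus "c * norm x \<le> norm (L x - scaleC (Complex \<mu> t) x)" using den
        by (simp add: c_def field_simps)
    qed
    define h where "h = c/2"
    have h0: "h > 0" "h < c" using c0 by (auto simp: h_def)
    define sg where "sg = sgn \<nu>"
    define tk where "tk = (\<lambda>k::nat. \<nu> + sg * (real k * h))"
    have abstk: "\<And>k. \<bar>tk k\<bar> = w + real k * h"
    proof -
      fix k
      have "tk k = sg * (w + real k * h)" unfolding tk_def sg_def w_def using nu0
        by (cases "\<nu> > 0") (auto simp: algebra_simps)
      moreover have "\<bar>sg\<bar> = 1" using nu0 by (simp add: sg_def abs_sgn)
      ultimately show "\<bar>tk k\<bar> = w + real k * h" using w0 h0 by (simp add: abs_mult)
    qed
    have wtk: "\<And>k. w \<le> \<bar>tk k\<bar>" using abstk h0 by simp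
    define P where "P = (\<lambda>k. surj (\<lambda>x. L x - scaleC (Complex \<mu> (tk k)) x))"
    define Nn where "Nn = nat \<lceil>(4*KM) / h\<rceil> + 1"
    have "(4*KM)/h < real Nn" unfolding Nn_def by linarith
    hence NnK: "4*KM < real Nn * h" using h0 by (simp add: field_simps)
    have PN: "P Nn"
      unfolding P_def
    proof (rule large_surj[OF linL _ KL])
      show "0 \<le> 4*KM" using KM0 by simp
      have "4*KM < \<bar>tk Nn\<bar>" using abstk[of Nn] NnK w0 by simp
      also have "\<bar>tk Nn\<bar> \<le> cmod (Complex \<mu> (tk Nn))" using abs_Im_le_cmod[of "Complex \<mu> (tk Nn)"] by simp
      finally show "4*KM < cmod (Complex \<mu> (tk Nn))" .
    qed
    have step: "\<And>k. P (Suc k) \<Longrightarrow> P k"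
    proof -
      fix k assume "P (Suc k)"
      thus "P k" unfolding P_def
      proof (rule propagate[OF linL _ c0 lower[OF wtk]])
        have "Complex \<mu> (tk k) - Complex \<mu> (tk (Suc k)) = Complex 0 (tk k - tk (Suc k))"
          by (simp add: complex_eq_iff)
        moreover have "tk k - tk (Suc k) = - sg * h" by (simp add: tk_def algebra_simps)
        moreover have "\<bar>sg\<bar> = 1" using nu0 by (simp add: sg_def abs_sgn)
        ultimately have "cmod (Complex \<mu> (tk k) - Complex \<mu> (tk (Suc k))) = h"
          using h0 by (simp add: cmod_def abs_mult real_sqrt_abs)
        thus "cmod (Complex \<mu> (tk k) - Complex \<mu> (tk (Suc k))) < c" using h0 by simp
      qed
    qed
    have "\<And>n. P (Nn - n)"
    proof -
      fix n show "P (Nn - n)"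
      proof (induction n)
        case 0 thus ?case using PN by simp
      next
        case (Suc n)
        show ?case
        proof (cases "n < Nn")
          case True
          hence "Nn - n = Suc (Nn - Suc n)" by simp
          thus ?thesis using Suc.IH step by metis
        next
          case False
          hence "Nn - Suc n = Nn - n" by simp
          thus ?thesis using Suc.IH by simp
        qed
      qed
    qed
    hence "P 0" by (metis diff_self_eq_0)
    hence su: "surj (\<lambda>x. L x - scaleC z x)" by (simp add: P_def tk_def zeq)
    have "z \<notin> cspec L"
      by (rule not_in_cspec[OF linL su c0]) (use lower[of \<nu>] in \<open>simp add: w_def zeq\<close>)
    thus False using zL by (simp add: L_def)
  qed
qed


end
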